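(* Let $\mathcal{C}$ be a symmetric monoidal category with discarding and zero morphisms which satisfies normalisation. Then (i) if $\psi$ is a non-zero pure state, its normalisation is pure; and (ii) if $\psi$ and $\phi$ are pure states, then $\psi\otimes\phi$ is pure.
   Context: $\mathcal{C}$ is symmetric monoidal with unit $I$; unitors are suppressed. States are morphisms $I\to A$, scalars are morphisms $I\to I$. Discarding: effects $\top_A\colon A\to I$ with $\top_{A\otimes B}=\top_A\otimes\top_B$ and $\top_I=1_I$. A morphism $f\colon A\to B$ is causal if $\top_B\circ f=\top_A$; a state $\rho$ is causal if $\top\circ\rho=1_I$. Zero morphisms: for all objects $A,B$ a morphism $0\colon A\to B$ such that composing (via $\circ$) or tensoring (via $\otimes$) $0$ with any morphism yields $0$. Normalisation: every non-zero state $\rho$ can be written as $\rho=\sigma\otimes r$ for a scalar $r$ and a unique causal state $\sigma$, called the normalisation of $\rho$. A state $\sigma$ of $B\otimes C$ is a dilation of a morphism/state $f$ of $B$ if $(1_B\otimes\top_C)\circ\sigma=f$. A morphism $f\colon A\to B$ is pure if either $f=0$ or: whenever $g\colon A\to B\otimes C$ satisfies $(1_B\otimes\top_C)\circ g=f$, then $g=f\otimes\rho$ for some causal state $\rho$ of $C$. *)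

theory Defs
  imports Main
begin

text \<open>A (strict) symmetric monoidal category presented by its data.
  Objects are all elements of type 'o; arrows are the elements of type 'm
  satisfying arr.  Composition comp g f means g after f.\<close>

record ('o, 'm) smc =
  arr   :: "'m \<Rightarrow> bool"
  dom   :: "'m \<Rightarrow> 'o"
  cod   :: "'m \<Rightarrow> 'o"
  comp  :: "'m \<Rightarrow> 'm \<Rightarrow> 'm"
  ident :: "'o \<Rightarrow> 'm"
  tobj  :: "'o \<Rightarrow> 'o \<Rightarrow> 'o"
  tarr  :: "'m \<Rightarrow> 'm \<Rightarrow> 'm"
  unit  :: "'o"
  sym   :: "'o \<Rightarrow> 'o \<Rightarrow> 'm"
  disc  :: "'o \<Rightarrow> 'm"
  zero  :: "'o \<Rightarrow> 'o \<Rightarrow> 'm"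

definition hom :: "('o, 'm) smc \<Rightarrow> 'm \<Rightarrow> 'o \<Rightarrow> 'o \<Rightarrow> bool" where
  "hom C f a b \<longleftrightarrow> arr C f \<and> dom C f = a \<and> cod C f = b"

definition is_category :: "('o, 'm) smc \<Rightarrow> bool" where
  "is_category C \<longleftrightarrow>
     (\<forall>a. hom C (ident C a) a a) \<and>
     (\<forall>f g a b c. hom C f a b \<longrightarrow> hom C g b c \<longrightarrow> hom C (comp C g f) a c) \<and>
     (\<forall>f a b. hom C f a b \<longrightarrow> comp C (ident C b) f = f \<and> comp C f (ident C a) = f) \<and>
     (\<forall>f g h a b c d. hom C f a b \<longrightarrow> hom C g b c \<longrightarrow> hom C h c d \<longrightarrow>
        comp C h (comp C g f) = comp C (comp C h g) f)"

definition is_strict_monoidal :: "('o, 'm) smc \<Rightarrow> bool" where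
  "is_strict_monoidal C \<longleftrightarrow>
     is_category C \<and>
     (\<forall>f g a b c d. hom C f a b \<longrightarrow> hom C g c d \<longrightarrow>
        hom C (tarr C f g) (tobj C a c) (tobj C b d)) \<and>
     (\<forall>a b. tarr C (ident C a) (ident C b) = ident C (tobj C a b)) \<and>
     (\<forall>f f' g g' a b c a' b' c'. hom C f a b \<longrightarrow> hom C g b c \<longrightarrow>
        hom C f' a' b' \<longrightarrow> hom C g' b' c' \<longrightarrow>
        tarr C (comp C g f) (comp C g' f') = comp C (tarr C g g') (tarr C f f')) \<and>
     (\<forall>a b c. tobj C (tobj C a b) c = tobj C a (tobj C b c)) \<and>
     (\<forall>a. tobj C (unit C) a = a \<and> tobj C a (unit C) = a) \<and>
     (\<forall>f g h. arr C f \<longrightarrow> arr C g \<longrightarrow> arr C h \<longrightarrow>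
        tarr C (tarr C f g) h = tarr C f (tarr C g h)) \<and>
     (\<forall>f. arr C f \<longrightarrow> tarr C (ident C (unit C)) f = f \<and> tarr C f (ident C (unit C)) = f)"

definition is_symmetric_monoidal :: "('o, 'm) smc \<Rightarrow> bool" where
  "is_symmetric_monoidal C \<longleftrightarrow>
     is_strict_monoidal C \<and>
     (\<forall>a b. hom C (sym C a b) (tobj C a b) (tobj C b a)) \<and>
     (\<forall>f g a b c d. hom C f a b \<longrightarrow> hom C g c d \<longrightarrow>
        comp C (sym C b d) (tarr C f g) = comp C (tarr C g f) (sym C a c)) \<and>
     (\<forall>a b. comp C (sym C b a) (sym C a b) = ident C (tobj C a b)) \<and>
     (\<forall>a b c. sym C a (tobj C b c) =
        comp C (tarr C (ident C b) (sym C a c)) (tarr C (sym C a b) (ident C c)))"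

definition has_discarding :: "('o, 'm) smc \<Rightarrow> bool" where
  "has_discarding C \<longleftrightarrow>
     (\<forall>a. hom C (disc C a) a (unit C)) \<and>
     (\<forall>a b. disc C (tobj C a b) = tarr C (disc C a) (disc C b)) \<and>
     disc C (unit C) = ident C (unit C)"

definition has_zeros :: "('o, 'm) smc \<Rightarrow> bool" where
  "has_zeros C \<longleftrightarrow>
     (\<forall>a b. hom C (zero C a b) a b) \<and>
     (\<forall>f a b c. hom C f b c \<longrightarrow> comp C f (zero C a b) = zero C a c) \<and>
     (\<forall>f a b c. hom C f a b \<longrightarrow> comp C (zero C b c) f = zero C a c) \<and>
     (\<forall>f a b c d. hom C f c d \<longrightarrow>
        tarr C (zero C a b) f = zero C (tobj C a c) (tobj C b d) \<and>
        tarr C f (zero C a b) = zero C (tobj C c a) (tobj C d b))"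

definition state :: "('o, 'm) smc \<Rightarrow> 'm \<Rightarrow> 'o \<Rightarrow> bool" where
  "state C \<rho> a \<longleftrightarrow> hom C \<rho> (unit C) a"

definition scalar :: "('o, 'm) smc \<Rightarrow> 'm \<Rightarrow> bool" where
  "scalar C r \<longleftrightarrow> hom C r (unit C) (unit C)"

definition causal :: "('o, 'm) smc \<Rightarrow> 'm \<Rightarrow> bool" where
  "causal C f \<longleftrightarrow> arr C f \<and> comp C (disc C (cod C f)) f = disc C (dom C f)"

definition causal_state :: "('o, 'm) smc \<Rightarrow> 'm \<Rightarrow> 'o \<Rightarrow> bool" where
  "causal_state C \<rho> a \<longleftrightarrow> state C \<rho> a \<and> comp C (disc C a) \<rho> = ident C (unit C)"

definition is_normalisation :: "('o, 'm) smc \<Rightarrow> 'm \<Rightarrow> 'm \<Rightarrow> bool" where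
  "is_normalisation C \<rho> \<sigma> \<longleftrightarrow>
     causal_state C \<sigma> (cod C \<rho>) \<and> (\<exists>r. scalar C r \<and> \<rho> = tarr C \<sigma> r)"

definition satisfies_normalisation :: "('o, 'm) smc \<Rightarrow> bool" where
  "satisfies_normalisation C \<longleftrightarrow>
     (\<forall>\<rho> a. state C \<rho> a \<longrightarrow> \<rho> \<noteq> zero C (unit C) a \<longrightarrow>
        (\<exists>!\<sigma>. is_normalisation C \<rho> \<sigma>))"

definition pure :: "('o, 'm) smc \<Rightarrow> 'm \<Rightarrow> bool" where
  "pure C f \<longleftrightarrow> arr C f \<and>
     (f = zero C (dom C f) (cod C f) \<or>
      (\<forall>g c. hom C g (dom C f) (tobj C (cod C f) c) \<longrightarrow>
         comp C (tarr C (ident C (cod C f)) (disc C c)) g = f \<longrightarrow>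
         (\<exists>\<rho>. causal_state C \<rho> c \<and> g = tarr C f \<rho>)))"

end

theory Submission
  imports Defs
begin

locale ctx =
  fixes C :: "('o, 'm) smc"
  assumes sm: "is_symmetric_monoidal C"
    and dc: "has_discarding C"
    and zr: "has_zeros C"
    and nm: "satisfies_normalisation C"
begin

lemma smon: "is_strict_monoidal C" using sm unfolding is_symmetric_monoidal_def by (elim conjE)
lemma cat: "is_category C" using smon unfolding is_strict_monoidal_def by (elim conjE)

lemmas CA = cat[unfolded is_category_def]
lemmas SM = smon[unfolded is_strict_monoidal_def, THEN conjunct2]
lemmas SY = sm[unfolded is_symmetric_monoidal_def, THEN conjunct2]
lemmas DC = dc[unfolded has_discarding_def]
lemmas ZR = zr[unfolded has_zeros_def]

lemma H_id[intro,simp]: "hom C (ident C a) a a" by (rule CA[THEN conjunct1, rule_format])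
lemma H_comp[intro]: "hom C f a b \<Longrightarrow> hom C g b c \<Longrightarrow> hom C (comp C g f) a c"
  by (rule CA[THEN conjunct2, THEN conjunct1, rule_format])
lemma id_l[simp]: "hom C f a b \<Longrightarrow> comp C (ident C b) f = f"
  using CA[THEN conjunct2, THEN conjunct2, THEN conjunct1, rule_format] by blast
lemma id_r[simp]: "hom C f a b \<Longrightarrow> comp C f (ident C a) = f"
  using CA[THEN conjunct2, THEN conjunct2, THEN conjunct1, rule_format] by blast
lemma assoc: "hom C f a b \<Longrightarrow> hom C g b c \<Longrightarrow> hom C h c d \<Longrightarrow> comp C h (comp C g f) = comp C (comp C h g) f"
  by (rule CA[THEN conjunct2, THEN conjunct2, THEN conjunct2, rule_format])

lemma H_t[intro]: "hom C f a b \<Longrightarrow> hom C g c d \<Longrightarrow> hom C (tarr C f g) (tobj C a c) (tobj C b d)"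
  by (rule SM[THEN conjunct1, rule_format])
lemma t_id: "tarr C (ident C a) (ident C b) = ident C (tobj C a b)"
  by (rule SM[THEN conjunct2, THEN conjunct1, rule_format])
lemma interchange: "hom C f a b \<Longrightarrow> hom C g b c \<Longrightarrow> hom C f' a' b' \<Longrightarrow> hom C g' b' c' \<Longrightarrow>
        tarr C (comp C g f) (comp C g' f') = comp C (tarr C g g') (tarr C f f')"
  by (rule SM[THEN conjunct2, THEN conjunct2, THEN conjunct1, rule_format])
lemma tobj_assoc[simp]: "tobj C (tobj C a b) c = tobj C a (tobj C b c)"
  by (rule SM[THEN conjunct2, THEN conjunct2, THEN conjunct2, THEN conjunct1, rule_format])
lemma tobj_unit[simp]: "tobj C (unit C) a = a" "tobj C a (unit C) = a"
  using SM[THEN conjunct2, THEN conjunct2, THEN conjunct2, THEN conjunct2, THEN conjunct1, rule_format] by blast+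
lemma tarr_assoc: "arr C f \<Longrightarrow> arr C g \<Longrightarrow> arr C h \<Longrightarrow> tarr C (tarr C f g) h = tarr C f (tarr C g h)"
  by (rule SM[THEN conjunct2, THEN conjunct2, THEN conjunct2, THEN conjunct2, THEN conjunct2, THEN conjunct1, rule_format])
lemma tarr_unit[simp]: "arr C f \<Longrightarrow> tarr C (ident C (unit C)) f = f" "arr C f \<Longrightarrow> tarr C f (ident C (unit C)) = f"
  using SM[THEN conjunct2, THEN conjunct2, THEN conjunct2, THEN conjunct2, THEN conjunct2, THEN conjunct2, rule_format] by blast+

lemma H_sym[intro]: "hom C (sym C a b) (tobj C a b) (tobj C b a)"
  by (rule SY[THEN conjunct1, rule_format])
lemma natural: "hom C f a b \<Longrightarrow> hom C g c d \<Longrightarrow>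
        comp C (sym C b d) (tarr C f g) = comp C (tarr C g f) (sym C a c)"
  by (rule SY[THEN conjunct2, THEN conjunct1, rule_format])
lemma symsym: "comp C (sym C b a) (sym C a b) = ident C (tobj C a b)"
  by (rule SY[THEN conjunct2, THEN conjunct2, THEN conjunct1, rule_format])
lemma hexagon: "sym C a (tobj C b c) =
        comp C (tarr C (ident C b) (sym C a c)) (tarr C (sym C a b) (ident C c))"
  by (rule SY[THEN conjunct2, THEN conjunct2, THEN conjunct2, rule_format])

lemma H_disc[intro,simp]: "hom C (disc C a) a (unit C)" by (rule DC[THEN conjunct1, rule_format])
lemma disc_t: "disc C (tobj C a b) = tarr C (disc C a) (disc C b)" by (rule DC[THEN conjunct2, THEN conjunct1, rule_format])
lemma disc_unit[simp]: "disc C (unit C) = ident C (unit C)" by (rule DC[THEN conjunct2, THEN conjunct2])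

lemma H_zero[intro,simp]: "hom C (zero C a b) a b" by (rule ZR[THEN conjunct1, rule_format])
lemma comp_zero1: "hom C f b c \<Longrightarrow> comp C f (zero C a b) = zero C a c"
  by (rule ZR[THEN conjunct2, THEN conjunct1, rule_format])
lemma comp_zero2: "hom C f a b \<Longrightarrow> comp C (zero C b c) f = zero C a c"
  by (rule ZR[THEN conjunct2, THEN conjunct2, THEN conjunct1, rule_format])
lemma tarr_zero: "hom C f c d \<Longrightarrow> tarr C (zero C a b) f = zero C (tobj C a c) (tobj C b d)"
   "hom C f c d \<Longrightarrow> tarr C f (zero C a b) = zero C (tobj C c a) (tobj C d b)"
  using ZR[THEN conjunct2, THEN conjunct2, THEN conjunct2, rule_format] by blast+

lemma hom_arr: "hom C f a b \<Longrightarrow> arr C f" by (simp add: hom_def)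

lemma sym_unit1: "sym C a (unit C) = ident C a"
proof -
  have h: "hom C (sym C a (unit C)) a a" using H_sym[of a "unit C"] by simp
  have e: "sym C a (unit C) = comp C (sym C a (unit C)) (sym C a (unit C))"
    using hexagon[of a "unit C" "unit C"] h hom_arr by simp
  have i: "comp C (sym C (unit C) a) (sym C a (unit C)) = ident C a" using symsym[where a=a and b="unit C"] by simp
  have h2: "hom C (sym C (unit C) a) a a" using H_sym[of "unit C" a] by simp
  have "ident C a = comp C (sym C (unit C) a) (comp C (sym C a (unit C)) (sym C a (unit C)))"
    using i e by simp
  also have "\<dots> = sym C a (unit C)" using assoc[OF h h h2] i h by simp
  finally show ?thesis by simp
qed

lemma sym_unit2: "sym C (unit C) a = ident C a"
proof -
  have h2: "hom C (sym C (unit C) a) a a" using H_sym[of "unit C" a] by simp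
  have "comp C (sym C (unit C) a) (sym C a (unit C)) = ident C a" using symsym[where a=a and b="unit C"] by simp
  thus ?thesis using sym_unit1 h2 by simp
qed

lemma scalar_comm: assumes hr: "hom C r (unit C) (unit C)" and hf: "hom C f a b" shows "tarr C r f = tarr C f r"
proof -
  have n: "comp C (sym C (unit C) b) (tarr C r f) = comp C (tarr C f r) (sym C (unit C) a)"
    using natural[OF hr hf] .
  have h1: "hom C (tarr C r f) a b" using H_t[OF hr hf] by simp
  have h2: "hom C (tarr C f r) a b" using H_t[OF hf hr] by simp
  show ?thesis using n sym_unit2 id_l[OF h1] id_r[OF h2] by metis
qed

lemma H_st[intro]: "hom C \<psi> (unit C) a \<Longrightarrow> hom C \<phi> (unit C) b \<Longrightarrow> hom C (tarr C \<psi> \<phi>) (unit C) (tobj C a b)"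
  using H_t[of \<psi> "unit C" a \<phi> "unit C" b] by simp

lemma mixL: "hom C \<psi> u a \<Longrightarrow> hom C g u' b \<Longrightarrow> hom C h b c \<Longrightarrow>
   comp C (tarr C (ident C a) h) (tarr C \<psi> g) = tarr C \<psi> (comp C h g)"
  using interchange[of \<psi> u a "ident C a" a g u' b h c] by simp

lemma mixR: "hom C g u b \<Longrightarrow> hom C \<phi> u' a \<Longrightarrow> hom C h b c \<Longrightarrow>
   comp C (tarr C h (ident C a)) (tarr C g \<phi>) = tarr C (comp C h g) \<phi>"
  using interchange[of g u b h c \<phi> u' a "ident C a" a] by simp

lemma disc_split: "tarr C (disc C a) (disc C c) = comp C (disc C a) (tarr C (ident C a) (disc C c))"
  using interchange[OF H_id H_disc H_disc H_id]
  unfolding id_r[OF H_disc] id_l[OF H_disc] tarr_unit(2)[OF hom_arr[OF H_disc]] by simp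

lemma causal_tensor: assumes "causal_state C \<sigma> a" "causal_state C \<rho> c"
  shows "causal_state C (tarr C \<sigma> \<rho>) (tobj C a c)"
proof -
  have h1: "hom C \<sigma> (unit C) a" "hom C \<rho> (unit C) c" using assms unfolding causal_state_def state_def by auto
  have "comp C (disc C (tobj C a c)) (tarr C \<sigma> \<rho>) = tarr C (comp C (disc C a) \<sigma>) (comp C (disc C c) \<rho>)"
    using interchange[of \<sigma> "unit C" a "disc C a" "unit C" \<rho> "unit C" c "disc C c" "unit C"] h1 disc_t by simp
  also have "\<dots> = ident C (unit C)" using assms unfolding causal_state_def by (simp add: t_id)
  finally show ?thesis using h1 unfolding causal_state_def state_def by blast
qed

lemma part1:
  assumes hp: "hom C \<psi> (unit C) a" and nz: "\<psi> \<noteq> zero C (unit C) a" and pp: "pure C \<psi>"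
    and cs: "causal_state C \<sigma> a" and sr: "hom C r (unit C) (unit C)" and pe: "\<psi> = tarr C \<sigma> r"
  shows "pure C \<sigma>"
proof -
  have hs: "hom C \<sigma> (unit C) a" using cs unfolding causal_state_def state_def by auto
  have ds: "comp C (disc C a) \<sigma> = ident C (unit C)" using cs unfolding causal_state_def by auto
  have key: "\<exists>\<rho>. causal_state C \<rho> c \<and> g = tarr C \<sigma> \<rho>"
    if hg: "hom C g (unit C) (tobj C a c)" and dg: "comp C (tarr C (ident C a) (disc C c)) g = \<sigma>" for g c
  proof -
    have hD: "hom C (tarr C (ident C a) (disc C c)) (tobj C a c) a" using H_t[of "ident C a" a a "disc C c" c "unit C"] by simp
    have hG: "hom C (tarr C g r) (unit C) (tobj C a c)" using H_st[OF hg sr] by simp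
    have "comp C (tarr C (ident C a) (disc C c)) (tarr C g r) = tarr C (comp C (tarr C (ident C a) (disc C c)) g) (comp C (ident C (unit C)) r)"
      using interchange[of g "unit C" "tobj C a c" "tarr C (ident C a) (disc C c)" a r "unit C" "unit C" "ident C (unit C)" "unit C"] hg hD sr hom_arr
      by simp
    also have "\<dots> = \<psi>" using dg sr pe by simp
    finally have dG: "comp C (tarr C (ident C a) (disc C c)) (tarr C g r) = \<psi>" .
    from pp nz hp have "\<forall>g c. hom C g (unit C) (tobj C a c) \<longrightarrow>
         comp C (tarr C (ident C a) (disc C c)) g = \<psi> \<longrightarrow>
         (\<exists>\<rho>. causal_state C \<rho> c \<and> g = tarr C \<psi> \<rho>)" unfolding pure_def hom_def by auto
    with hG dG obtain \<rho> where cr: "causal_state C \<rho> c" and ge: "tarr C g r = tarr C \<psi> \<rho>" by blast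
    have hr: "hom C \<rho> (unit C) c" using cr unfolding causal_state_def state_def by auto
    have "tarr C \<psi> \<rho> = tarr C \<sigma> (tarr C r \<rho>)" using pe tarr_assoc hs sr hr hom_arr by metis
    also have "\<dots> = tarr C \<sigma> (tarr C \<rho> r)" using scalar_comm[OF sr hr] by simp
    also have "\<dots> = tarr C (tarr C \<sigma> \<rho>) r" using tarr_assoc hs sr hr hom_arr by metis
    finally have ge2: "tarr C g r = tarr C (tarr C \<sigma> \<rho>) r" using ge by simp
    have gnz: "tarr C g r \<noteq> zero C (unit C) (tobj C a c)"
    proof
      assume "tarr C g r = zero C (unit C) (tobj C a c)"
      hence "\<psi> = comp C (tarr C (ident C a) (disc C c)) (zero C (unit C) (tobj C a c))" using dG by simp
      also have "\<dots> = zero C (unit C) a" using comp_zero1[OF hD] .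
      finally show False using nz by simp
    qed
    have cg: "causal_state C g (tobj C a c)"
    proof -
      have "comp C (disc C (tobj C a c)) g = comp C (disc C a) (comp C (tarr C (ident C a) (disc C c)) g)"
        using disc_split[of a c] disc_t assoc[OF hg hD H_disc] by simp
      also have "\<dots> = ident C (unit C)" using dg ds by simp
      finally show ?thesis using hg unfolding causal_state_def state_def by simp
    qed
    have csr: "causal_state C (tarr C \<sigma> \<rho>) (tobj C a c)" using causal_tensor[OF cs cr] .
    have n1: "is_normalisation C (tarr C g r) g" using cg hG sr unfolding is_normalisation_def hom_def scalar_def by auto
    have n2: "is_normalisation C (tarr C g r) (tarr C \<sigma> \<rho>)" using csr hG sr ge2 unfolding is_normalisation_def hom_def scalar_def by auto
    from nm hG gnz have "\<exists>!s. is_normalisation C (tarr C g r) s" unfolding satisfies_normalisation_def state_def by blast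
    with n1 n2 have "g = tarr C \<sigma> \<rho>" by blast
    with cr show ?thesis by blast
  qed
  have d: "dom C \<sigma> = unit C" "cod C \<sigma> = a" "arr C \<sigma>" using hs unfolding hom_def by auto
  show ?thesis unfolding pure_def d using d(3) key by blast
qed

lemma pureD:
  assumes "pure C f" "hom C f u a" "f \<noteq> zero C u a" "hom C g u (tobj C a c)"
    "comp C (tarr C (ident C a) (disc C c)) g = f"
  shows "\<exists>\<rho>. causal_state C \<rho> c \<and> g = tarr C f \<rho>"
proof -
  have d: "dom C f = u" "cod C f = a" using assms(2) unfolding hom_def by auto
  from assms(1,3) have "\<forall>g c. hom C g u (tobj C a c) \<longrightarrow>
         comp C (tarr C (ident C a) (disc C c)) g = f \<longrightarrow>
         (\<exists>\<rho>. causal_state C \<rho> c \<and> g = tarr C f \<rho>)" unfolding pure_def d by blast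
  thus ?thesis using assms(4,5) by blast
qed

lemma csD: "causal_state C \<rho> c \<Longrightarrow> hom C \<rho> (unit C) c"
  unfolding causal_state_def state_def by auto

lemma normD:
  assumes "hom C \<psi> (unit C) a" "\<psi> \<noteq> zero C (unit C) a"
  shows "\<exists>\<sigma> r. causal_state C \<sigma> a \<and> hom C r (unit C) (unit C) \<and> \<psi> = tarr C \<sigma> r"
proof -
  have "\<forall>\<rho> a. state C \<rho> a \<longrightarrow> \<rho> \<noteq> zero C (unit C) a \<longrightarrow> (\<exists>!\<sigma>. is_normalisation C \<rho> \<sigma>)"
    using nm unfolding satisfies_normalisation_def .
  hence "\<exists>!\<sigma>. is_normalisation C \<psi> \<sigma>" using assms unfolding state_def by blast
  then obtain \<sigma> where n: "is_normalisation C \<psi> \<sigma>" by (rule ex1E)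
  have d: "cod C \<psi> = a" using assms(1) unfolding hom_def by auto
  show ?thesis using n unfolding is_normalisation_def scalar_def d by blast
qed

lemma lemL:
  assumes hp: "hom C \<psi> (unit C) a" and pp: "pure C \<psi>" and cp: "comp C (disc C a) \<psi> = ident C (unit C)"
    and np: "\<psi> \<noteq> zero C (unit C) a"
    and hq: "hom C \<phi> (unit C) b" and pq: "pure C \<phi>" and cq: "comp C (disc C b) \<phi> = ident C (unit C)"
    and nq: "\<phi> \<noteq> zero C (unit C) b"
    and hg: "hom C g (unit C) (tobj C a (tobj C b c))"
    and dg: "comp C (tarr C (ident C (tobj C a b)) (disc C c)) g = tarr C \<psi> \<phi>"
  shows "\<exists>\<rho>. causal_state C \<rho> c \<and> g = tarr C (tarr C \<psi> \<phi>) \<rho>"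
proof -
  have hAB: "hom C (tarr C (ident C a) (disc C b)) (tobj C a b) a"
    using H_t[OF H_id H_disc, of a b] by simp
  have hD: "hom C (tarr C (ident C (tobj C a b)) (disc C c)) (tobj C a (tobj C b c)) (tobj C a b)"
    using H_t[OF H_id H_disc, of "tobj C a b" c] by simp
  have E1: "tarr C (ident C a) (disc C (tobj C b c)) =
      comp C (tarr C (ident C a) (disc C b)) (tarr C (ident C (tobj C a b)) (disc C c))"
  proof -
    have "tarr C (ident C a) (disc C (tobj C b c)) = tarr C (tarr C (ident C a) (disc C b)) (disc C c)"
      unfolding disc_t by (rule tarr_assoc[OF hom_arr[OF H_id] hom_arr[OF H_disc] hom_arr[OF H_disc], symmetric])
    also have "\<dots> = tarr C (comp C (tarr C (ident C a) (disc C b)) (ident C (tobj C a b))) (comp C (ident C (unit C)) (disc C c))"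
      using id_r[OF hAB] id_l[OF H_disc] by simp
    also have "\<dots> = comp C (tarr C (tarr C (ident C a) (disc C b)) (ident C (unit C))) (tarr C (ident C (tobj C a b)) (disc C c))"
      by (rule interchange[OF H_id hAB H_disc H_id])
    also have "\<dots> = comp C (tarr C (ident C a) (disc C b)) (tarr C (ident C (tobj C a b)) (disc C c))"
      using tarr_unit(2)[OF hom_arr[OF hAB]] by simp
    finally show ?thesis .
  qed
  have "comp C (tarr C (ident C a) (disc C (tobj C b c))) g =
        comp C (tarr C (ident C a) (disc C b)) (comp C (tarr C (ident C (tobj C a b)) (disc C c)) g)"
    unfolding E1 using assoc[OF hg hD hAB] by simp
  also have "\<dots> = tarr C \<psi> (comp C (disc C b) \<phi>)" unfolding dg by (rule mixL[OF hp hq H_disc])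
  also have "\<dots> = \<psi>" using cq tarr_unit(2)[OF hom_arr[OF hp]] by simp
  finally have d1: "comp C (tarr C (ident C a) (disc C (tobj C b c))) g = \<psi>" .
  obtain \<rho>1 where c1: "causal_state C \<rho>1 (tobj C b c)" and g1: "g = tarr C \<psi> \<rho>1"
    using pureD[OF pp hp np hg d1] by blast
  have h1: "hom C \<rho>1 (unit C) (tobj C b c)" using csD[OF c1] .
  have hBC: "hom C (tarr C (ident C b) (disc C c)) (tobj C b c) b"
    using H_t[OF H_id H_disc, of b c] by simp
  have hX: "hom C (comp C (tarr C (ident C b) (disc C c)) \<rho>1) (unit C) b" using H_comp[OF h1 hBC] .
  have E2: "tarr C (ident C (tobj C a b)) (disc C c) = tarr C (ident C a) (tarr C (ident C b) (disc C c))"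
    unfolding t_id[of a b, symmetric] by (rule tarr_assoc[OF hom_arr[OF H_id] hom_arr[OF H_id] hom_arr[OF H_disc]])
  have "tarr C \<psi> (comp C (tarr C (ident C b) (disc C c)) \<rho>1) = tarr C \<psi> \<phi>"
    using dg unfolding g1 E2 mixL[OF hp h1 hBC] .
  hence "comp C (tarr C (disc C a) (ident C b)) (tarr C \<psi> (comp C (tarr C (ident C b) (disc C c)) \<rho>1))
       = comp C (tarr C (disc C a) (ident C b)) (tarr C \<psi> \<phi>)" by simp
  hence d2: "comp C (tarr C (ident C b) (disc C c)) \<rho>1 = \<phi>"
    unfolding mixR[OF hp hX H_disc] mixR[OF hp hq H_disc] cp
    using tarr_unit(1)[OF hom_arr[OF hX]] tarr_unit(1)[OF hom_arr[OF hq]] by simp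
  obtain \<rho> where c2: "causal_state C \<rho> c" and g2: "\<rho>1 = tarr C \<phi> \<rho>"
    using pureD[OF pq hq nq h1 d2] by blast
  have "g = tarr C (tarr C \<psi> \<phi>) \<rho>"
    unfolding g1 g2 by (rule tarr_assoc[OF hom_arr[OF hp] hom_arr[OF hq] hom_arr[OF csD[OF c2]], symmetric])
  with c2 show ?thesis by blast
qed

lemma part2:
  assumes hp: "hom C \<psi> (unit C) a" and hq: "hom C \<phi> (unit C) b" and pp: "pure C \<psi>" and pq: "pure C \<phi>"
  shows "pure C (tarr C \<psi> \<phi>)"
proof (cases "tarr C \<psi> \<phi> = zero C (unit C) (tobj C a b)")
  case True
  have hP: "hom C (tarr C \<psi> \<phi>) (unit C) (tobj C a b)" using H_st[OF hp hq] .
  then show ?thesis using True unfolding pure_def hom_def by auto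
next
  case False
  define P where "P = tarr C \<psi> \<phi>"
  have hP: "hom C P (unit C) (tobj C a b)" unfolding P_def using H_st[OF hp hq] .
  have nP: "P \<noteq> zero C (unit C) (tobj C a b)" using False unfolding P_def .
  have np: "\<psi> \<noteq> zero C (unit C) a"
  proof
    assume "\<psi> = zero C (unit C) a"
    hence "P = zero C (unit C) (tobj C a b)" unfolding P_def using tarr_zero(1)[OF hq, of "unit C" a] by simp
    thus False using nP by simp
  qed
  have nq: "\<phi> \<noteq> zero C (unit C) b"
  proof
    assume "\<phi> = zero C (unit C) b"
    hence "P = zero C (unit C) (tobj C a b)" unfolding P_def using tarr_zero(2)[OF hp, of "unit C" b] by simp
    thus False using nP by simp
  qed
  have dp: "cod C \<psi> = a" "cod C \<phi> = b" using hp hq unfolding hom_def by auto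
  obtain \<psi>' r where c\<psi>: "causal_state C \<psi>' a" and sr: "hom C r (unit C) (unit C)" and e\<psi>: "\<psi> = tarr C \<psi>' r"
    using normD[OF hp np] by blast
  obtain \<phi>' s where c\<phi>: "causal_state C \<phi>' b" and ss: "hom C s (unit C) (unit C)" and e\<phi>: "\<phi> = tarr C \<phi>' s"
    using normD[OF hq nq] by blast
  have hp': "hom C \<psi>' (unit C) a" and hq': "hom C \<phi>' (unit C) b" using csD c\<psi> c\<phi> by auto
  have pp': "pure C \<psi>'" using part1[OF hp np pp c\<psi> sr e\<psi>] .
  have pq': "pure C \<phi>'" using part1[OF hq nq pq c\<phi> ss e\<phi>] .
  have np': "\<psi>' \<noteq> zero C (unit C) a"
  proof
    assume "\<psi>' = zero C (unit C) a"
    hence "\<psi> = zero C (tobj C (unit C) (unit C)) (tobj C a (unit C))" using e\<psi> tarr_zero(1)[OF sr, of "unit C" a] by simp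
    thus False using np by simp
  qed
  have nq': "\<phi>' \<noteq> zero C (unit C) b"
  proof
    assume "\<phi>' = zero C (unit C) b"
    hence "\<phi> = zero C (tobj C (unit C) (unit C)) (tobj C b (unit C))" using e\<phi> tarr_zero(1)[OF ss, of "unit C" b] by simp
    thus False using nq by simp
  qed
  have cp': "comp C (disc C a) \<psi>' = ident C (unit C)" using c\<psi> unfolding causal_state_def by auto
  have cq': "comp C (disc C b) \<phi>' = ident C (unit C)" using c\<phi> unfolding causal_state_def by auto
  have hrs: "hom C (tarr C r s) (unit C) (unit C)" using H_st[OF sr ss] by simp
  have Pe: "P = tarr C (tarr C \<psi>' \<phi>') (tarr C r s)"
  proof -
    have ar: "arr C \<psi>'" "arr C \<phi>'" "arr C r" "arr C s" using hp' hq' sr ss hom_arr by auto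
    have a2: "arr C (tarr C r \<phi>')" "arr C (tarr C \<phi>' s)" "arr C (tarr C r s)"
      using hom_arr[OF H_t[OF sr hq']] hom_arr[OF H_t[OF hq' ss]] hom_arr[OF H_t[OF sr ss]] by auto
    have "P = tarr C \<psi>' (tarr C r (tarr C \<phi>' s))" unfolding P_def e\<psi> e\<phi>
      by (rule tarr_assoc[OF ar(1) ar(3) a2(2)])
    also have "\<dots> = tarr C \<psi>' (tarr C (tarr C r \<phi>') s)" using tarr_assoc[OF ar(3) ar(2) ar(4)] by simp
    also have "\<dots> = tarr C \<psi>' (tarr C (tarr C \<phi>' r) s)" using scalar_comm[OF sr hq'] by simp
    also have "\<dots> = tarr C \<psi>' (tarr C \<phi>' (tarr C r s))" using tarr_assoc[OF ar(2) ar(3) ar(4)] by simp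
    also have "\<dots> = tarr C (tarr C \<psi>' \<phi>') (tarr C r s)" using tarr_assoc[OF ar(1) ar(2) a2(3)] by simp
    finally show ?thesis .
  qed
  have cpq: "causal_state C (tarr C \<psi>' \<phi>') (tobj C a b)" using causal_tensor[OF c\<psi> c\<phi>] .
  have key: "\<exists>\<rho>. causal_state C \<rho> c \<and> g = tarr C P \<rho>"
    if hg: "hom C g (unit C) (tobj C (tobj C a b) c)"
    and dg: "comp C (tarr C (ident C (tobj C a b)) (disc C c)) g = P" for g c
  proof -
    have hD: "hom C (tarr C (ident C (tobj C a b)) (disc C c)) (tobj C (tobj C a b) c) (tobj C a b)"
      using H_t[OF H_id H_disc, of "tobj C a b" c] by simp
    have ng: "g \<noteq> zero C (unit C) (tobj C (tobj C a b) c)"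
    proof
      assume "g = zero C (unit C) (tobj C (tobj C a b) c)"
      hence "P = zero C (unit C) (tobj C a b)" using dg comp_zero1[OF hD] by simp
      thus False using nP by simp
    qed
    have dgc: "cod C g = tobj C (tobj C a b) c" using hg unfolding hom_def by auto
    obtain g' t where cg': "causal_state C g' (tobj C (tobj C a b) c)" and st: "hom C t (unit C) (unit C)"
      and eg: "g = tarr C g' t"
      using normD[OF hg ng] by blast
    have hg': "hom C g' (unit C) (tobj C (tobj C a b) c)" using csD[OF cg'] .
    define h where "h = comp C (tarr C (ident C (tobj C a b)) (disc C c)) g'"
    have hh: "hom C h (unit C) (tobj C a b)" unfolding h_def using H_comp[OF hg' hD] .
    have ch: "causal_state C h (tobj C a b)"
    proof -
      have "comp C (disc C (tobj C a b)) h = comp C (comp C (disc C (tobj C a b)) (tarr C (ident C (tobj C a b)) (disc C c))) g'"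
        unfolding h_def using assoc[OF hg' hD H_disc] .
      also have "\<dots> = comp C (disc C (tobj C (tobj C a b) c)) g'"
        using disc_split[of "tobj C a b" c] disc_t[of "tobj C a b" c] by simp
      also have "\<dots> = ident C (unit C)" using cg' unfolding causal_state_def by auto
      finally show ?thesis using hh unfolding causal_state_def state_def by simp
    qed
    have Ph: "P = tarr C h t"
    proof -
      have "tarr C (comp C (tarr C (ident C (tobj C a b)) (disc C c)) g') (comp C (ident C (unit C)) t)
          = comp C (tarr C (tarr C (ident C (tobj C a b)) (disc C c)) (ident C (unit C))) (tarr C g' t)"
        by (rule interchange[OF hg' hD st H_id])
      thus ?thesis using dg eg tarr_unit(2)[OF hom_arr[OF hD]] id_l[OF st] unfolding h_def by simp
    qed
    have dP: "cod C P = tobj C a b" using hP unfolding hom_def by auto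
    have n1: "is_normalisation C P h" using ch st Ph unfolding is_normalisation_def scalar_def dP by blast
    have n2: "is_normalisation C P (tarr C \<psi>' \<phi>')" using cpq hrs Pe unfolding is_normalisation_def scalar_def dP by blast
    from nm hP nP have "\<exists>!x. is_normalisation C P x" unfolding satisfies_normalisation_def state_def by blast
    with n1 n2 have heq: "h = tarr C \<psi>' \<phi>'" by blast
    have hg'': "hom C g' (unit C) (tobj C a (tobj C b c))" using hg' by simp
    obtain \<rho> where cr: "causal_state C \<rho> c" and g'e: "g' = tarr C (tarr C \<psi>' \<phi>') \<rho>"
      using lemL[OF hp' pp' cp' np' hq' pq' cq' nq' hg''] heq unfolding h_def by blast
    have hr: "hom C \<rho> (unit C) c" using csD[OF cr] .
    have ar: "arr C (tarr C \<psi>' \<phi>')" "arr C \<rho>" "arr C t" using hom_arr H_st[OF hp' hq'] hr st by auto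
    have "g = tarr C (tarr C \<psi>' \<phi>') (tarr C \<rho> t)" unfolding eg g'e by (rule tarr_assoc[OF ar(1) ar(2) ar(3)])
    also have "\<dots> = tarr C (tarr C \<psi>' \<phi>') (tarr C t \<rho>)" using scalar_comm[OF st hr] by simp
    also have "\<dots> = tarr C P \<rho>" unfolding Ph heq by (rule tarr_assoc[OF ar(1) ar(3) ar(2), symmetric])
    finally show ?thesis using cr by blast
  qed
  have d: "dom C P = unit C" "cod C P = tobj C a b" "arr C P" using hP unfolding hom_def by auto
  show ?thesis unfolding P_def[symmetric] pure_def d using d(3) key by blast
qed

end

theorem mainTheorem5:
  fixes C :: "('o, 'm) smc"
  assumes "is_symmetric_monoidal C"
    and "has_discarding C"
    and "has_zeros C"
    and "satisfies_normalisation C"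
  shows "(\<forall>\<psi> \<sigma> a. state C \<psi> a \<longrightarrow> \<psi> \<noteq> zero C (unit C) a \<longrightarrow> pure C \<psi> \<longrightarrow>
            is_normalisation C \<psi> \<sigma> \<longrightarrow> pure C \<sigma>)
       \<and> (\<forall>\<psi> \<phi> a b. state C \<psi> a \<longrightarrow> state C \<phi> b \<longrightarrow> pure C \<psi> \<longrightarrow> pure C \<phi> \<longrightarrow>
            pure C (tarr C \<psi> \<phi>))"
proof -
  interpret ctx C using assms by (unfold_locales)
  have A: "pure C \<sigma>" if P: "state C \<psi> a" "\<psi> \<noteq> zero C (unit C) a" "pure C \<psi>" "is_normalisation C \<psi> \<sigma>"
    for \<psi> \<sigma> a
  proof -
    have h: "hom C \<psi> (unit C) a" using P(1) unfolding state_def .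
    have d: "cod C \<psi> = a" using h unfolding hom_def by auto
    obtain r where "causal_state C \<sigma> a" "hom C r (unit C) (unit C)" "\<psi> = tarr C \<sigma> r"
      using P(4) unfolding is_normalisation_def scalar_def d by blast
    thus ?thesis using part1[OF h P(2) P(3)] by blast
  qed
  have B: "pure C (tarr C \<psi> \<phi>)" if "state C \<psi> a" "state C \<phi> b" "pure C \<psi>" "pure C \<phi>" for \<psi> \<phi> a b
    using part2 that unfolding state_def by blast
  show ?thesis using A B by blast
qed

end
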